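(* Fix $\epsilon>0$ and let $Q=\{(x,y)\in\mathbb R^2: x>y+\epsilon\}$ (equivalently $Q=\{(x,y):(y,x)\notin P\}$ where $(x,y)\in P\iff x+\epsilon\geq y$). Then there is no family $\mathcal V$ (of any cardinality) of continuous functions $v:\mathbb R\to\mathbb R$ such that for all $x,y\in\mathbb R$: $(x,y)\in Q$ if and only if $v(x)\geq v(y)$ for all $v\in\mathcal V$ and $v(x)>v(y)$ for some $v\in\mathcal V$. In other words, $P$ admits no continuous embedding into $\mathbb R^I$ with the Pareto order, for any index set $I$.
   Context: The Pareto order on $\mathbb R^I$: $(x_\alpha)\succ(y_\alpha)$ iff $x_\alpha\geq y_\alpha$ for all $\alpha\in I$ and $x_\alpha>y_\alpha$ for some $\alpha\in I$. *)

theory Defs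
  imports "HOL-Analysis.Analysis"
begin

definition pareto_represents :: "(real \<Rightarrow> real) set \<Rightarrow> (real \<Rightarrow> real \<Rightarrow> bool) \<Rightarrow> bool" where
  "pareto_represents V Q \<longleftrightarrow>
     (\<forall>x y. Q x y \<longleftrightarrow> ((\<forall>v\<in>V. v x \<ge> v y) \<and> (\<exists>v\<in>V. v x > v y)))"

end

theory Submission
  imports Defs
begin

theorem mainTheorem7:
  fixes \<epsilon> :: real
  assumes "\<epsilon> > 0"
  shows "\<not> (\<exists>V :: (real \<Rightarrow> real) set.
             (\<forall>v\<in>V. continuous_on UNIV v) \<and>
             pareto_represents V (\<lambda>x y. x > y + \<epsilon>))"
proof
  assume "\<exists>V :: (real \<Rightarrow> real) set.
             (\<forall>v\<in>V. continuous_on UNIV v) \<and>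
             pareto_represents V (\<lambda>x y. x > y + \<epsilon>)"
  then obtain V :: "(real \<Rightarrow> real) set" where c: "\<forall>v\<in>V. continuous_on UNIV v"
    and rep: "pareto_represents V (\<lambda>x y. x > y + \<epsilon>)" by blast
  have r: "\<And>x y. x > y + \<epsilon> \<longleftrightarrow> ((\<forall>v\<in>V. v x \<ge> v y) \<and> (\<exists>v\<in>V. v x > v y))"
  proof -
    fix x y
    have r0: "\<forall>x y. x > y + \<epsilon> \<longleftrightarrow> ((\<forall>v\<in>V. v x \<ge> v y) \<and> (\<exists>v\<in>V. v x > v y))"
      using rep unfolding pareto_represents_def .
    show "x > y + \<epsilon> \<longleftrightarrow> ((\<forall>v\<in>V. v x \<ge> v y) \<and> (\<exists>v\<in>V. v x > v y))"
      by (rule r0[rule_format])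
  qed
  have ge: "v (y + \<epsilon>) \<ge> v y" if v: "v \<in> V" for v y
  proof -
    have "isCont v (y + \<epsilon>)" using c v by (simp add: continuous_on_eq_continuous_at)
    then have "(v \<longlongrightarrow> v (y + \<epsilon>)) (at_right (y + \<epsilon>))"
      unfolding isCont_def by (rule tendsto_mono[OF at_le[OF subset_UNIV]])
    moreover have "eventually (\<lambda>t. v y \<le> v t) (at_right (y + \<epsilon>))"
      using eventually_at_right_less[of "y + \<epsilon>"]
    proof (rule eventually_mono)
      fix t assume "y + \<epsilon> < t"
      then have "(\<forall>w\<in>V. w t \<ge> w y) \<and> (\<exists>w\<in>V. w t > w y)"
        using r[where x=t and y=y] by simp
      then show "v y \<le> v t" using v by simp
    qed
    ultimately show ?thesis by (rule tendsto_lowerbound) (rule trivial_limit_at_right_real)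
  qed
  have eq: "v (y + \<epsilon>) = v y" if v: "v \<in> V" for v y
  proof -
    have all: "\<forall>w\<in>V. w (y + \<epsilon>) \<ge> w y" using ge by blast
    have "\<not> (y + \<epsilon> > y + \<epsilon>)" by simp
    then have "\<not> ((\<forall>w\<in>V. w (y + \<epsilon>) \<ge> w y) \<and> (\<exists>w\<in>V. w (y + \<epsilon>) > w y))"
      using r[where x="y + \<epsilon>" and y=y] by simp
    then have "\<not> (v (y + \<epsilon>) > v y)" using all v by blast
    then show ?thesis using ge[OF v, of y] by linarith
  qed
  have "2 * \<epsilon> > 0 + \<epsilon>" using assms by simp
  then have "(\<forall>w\<in>V. w (2 * \<epsilon>) \<ge> w 0) \<and> (\<exists>w\<in>V. w (2 * \<epsilon>) > w 0)"
    using r[where x="2 * \<epsilon>" and y=0] by simp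
  then obtain v where v: "v \<in> V" "v (2 * \<epsilon>) > v 0" by blast
  have e1: "v (0 + \<epsilon>) = v 0" by (rule eq[OF v(1)])
  have e2: "v (\<epsilon> + \<epsilon>) = v \<epsilon>" by (rule eq[OF v(1)])
  have "2 * \<epsilon> = \<epsilon> + \<epsilon>" by (rule mult_2)
  then have "v (2 * \<epsilon>) = v 0" using e1 e2 by (metis add_0)
  then show False using v by simp
qed

end
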